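(* (1) For every $n\in\mathbb{N}$, the alternate Lyndon system $M(u_n\overline{v_n})$, i.e. the set of infinite binary words $x$ with $u_n\overline{v_n}\preceq x_kx_{k+1}\cdots$ for all $k\ge1$, has nonzero (positive) entropy. (2) The alternate Lyndon system $M(\phi^\infty(1))$ associated to $\phi^\infty(1)$ has entropy zero.
   Context: Alternate order: for two words $x=x_1x_2\cdots$, $y=y_1y_2\cdots$ over a finite alphabet of integers, $x\prec y$ iff there is $k$ with $x_i=y_i$ for all $i<k$ and $(-1)^k(x_k-y_k)<0$; $x\preceq y$ iff $x=y$ or $x\prec y$. For an infinite word $(d_i)$, its alternate Lyndon system $M((d_i))$ is the set of infinite words $x$ over $\{0,\dots,d_1\}$ with $d_1d_2\cdots\preceq x_kx_{k+1}\cdots$ for all $k\ge1$; its entropy is $\lim_{n\to\infty}\frac1n\log H_n$, $H_n$ the number of words of length $n$ occurring as finite factors of elements of the system. $\phi$ is the morphism on $\{0,1\}^*$ with $\phi(0)=1$, $\phi(1)=100$; $\phi^\infty(1)=\lim_n\phi^n(1)$. Set $u_n=\phi^n(1)$ for $n\ge0$, $v_0=00$ and $v_n=u_{n-1}u_{n-1}$ for $n>0$. For a finite word $w$, $\overline{w}=www\cdots$. *)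

theory Defs
  imports Complex_Main
begin

text \<open>Infinite words are functions nat => nat; position i (0-based) corresponds to
  the paper's position i+1 (1-based).\<close>

definition alt_less :: "(nat \<Rightarrow> nat) \<Rightarrow> (nat \<Rightarrow> nat) \<Rightarrow> bool" where
  "alt_less x y \<longleftrightarrow> (\<exists>k::nat. (\<forall>i<k. x i = y i) \<and>
      (-1::int) ^ (k + 1) * (int (x k) - int (y k)) < 0)"

definition alt_le :: "(nat \<Rightarrow> nat) \<Rightarrow> (nat \<Rightarrow> nat) \<Rightarrow> bool" where
  "alt_le x y \<longleftrightarrow> x = y \<or> alt_less x y"

definition alt_lyndon :: "(nat \<Rightarrow> nat) \<Rightarrow> (nat \<Rightarrow> nat) set" where
  "alt_lyndon d = {x. (\<forall>i. x i \<le> d 0) \<and> (\<forall>k. alt_le d (\<lambda>i. x (k + i)))}"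

definition factors :: "(nat \<Rightarrow> nat) set \<Rightarrow> nat \<Rightarrow> nat list set" where
  "factors M n = {w. \<exists>x\<in>M. \<exists>k. w = map (\<lambda>i. x (k + i)) [0..<n]}"

definition entropy_tends :: "(nat \<Rightarrow> nat) set \<Rightarrow> real \<Rightarrow> bool" where
  "entropy_tends M h \<longleftrightarrow> ((\<lambda>n. ln (real (card (factors M n))) / real n) \<longlonglongrightarrow> h)"

fun phi_letter :: "nat \<Rightarrow> nat list" where
  "phi_letter 0 = [1]"
| "phi_letter _ = [1, 0, 0]"

definition phi :: "nat list \<Rightarrow> nat list" where
  "phi w = concat (map phi_letter w)"

definition u :: "nat \<Rightarrow> nat list" where
  "u n = (phi ^^ n) [1]"

definition v :: "nat \<Rightarrow> nat list" where
  "v n = (if n = 0 then [0, 0] else u (n - 1) @ u (n - 1))"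

definition eventually_periodic :: "nat list \<Rightarrow> nat list \<Rightarrow> nat \<Rightarrow> nat" where
  "eventually_periodic p q i =
     (if i < length p then p ! i else q ! ((i - length p) mod length q))"

text \<open>phi^infinity(1): the limit of the words u n; u (i+1) has length > i and
  each u n is a prefix of u (n+1).\<close>
definition phi_inf :: "nat \<Rightarrow> nat" where
  "phi_inf i = u (Suc i) ! i"

end

theory Submission
  imports Defs "HOL-Real_Asymp.Real_Asymp"
begin


definition pre :: "(nat \<Rightarrow> nat) \<Rightarrow> nat \<Rightarrow> nat list" where
  "pre x n = map x [0..<n]"
definition sh :: "nat \<Rightarrow> (nat \<Rightarrow> nat) \<Rightarrow> (nat \<Rightarrow> nat)" where
  "sh k x = (\<lambda>i. x (k + i))"
definition prep :: "nat list \<Rightarrow> (nat \<Rightarrow> nat) \<Rightarrow> (nat \<Rightarrow> nat)" where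
  "prep w x = (\<lambda>i. if i < length w then w ! i else x (i - length w))"
definition phiw :: "(nat \<Rightarrow> nat) \<Rightarrow> (nat \<Rightarrow> nat)" where
  "phiw x j = phi (pre x (Suc j)) ! j"
definition binary :: "(nat \<Rightarrow> nat) \<Rightarrow> bool" where
  "binary x \<longleftrightarrow> (\<forall>i. x i \<le> 1)"

lemma phi_Nil[simp]: "phi [] = []" by (simp add: phi_def)
lemma phi_Cons[simp]: "phi (a # w) = phi_letter a @ phi w" by (simp add: phi_def)
lemma phi_append[simp]: "phi (a @ b) = phi a @ phi b" by (simp add: phi_def)
lemma phi_letter_len: "length (phi_letter a) = (if a = 0 then 1 else 3)"
  by (cases a) auto
lemma phi_letter_ne[simp]: "phi_letter a \<noteq> []" by (cases a) auto
lemma phi_len_ge: "length w \<le> length (phi w)"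
  by (induction w) (auto simp: phi_letter_len)
lemma phi_eq_Nil[simp]: "phi w = [] \<longleftrightarrow> w = []"
  by (cases w) auto
lemma phi_letter_hd[simp]: "phi_letter a ! 0 = 1" by (cases a) auto

lemma pre_Suc: "pre x (Suc n) = pre x n @ [x n]" by (simp add: pre_def)
lemma pre_len[simp]: "length (pre x n) = n" by (simp add: pre_def)
lemma pre_nth[simp]: "i < n \<Longrightarrow> pre x n ! i = x i" by (simp add: pre_def)
lemma pre_add: "pre x (m + n) = pre x m @ pre (sh m x) n"
  by (induction n) (auto simp: pre_Suc sh_def pre_def)

lemma phi_prefix_nth:
  assumes "j < length (phi (pre x m))"
  shows "phiw x j = phi (pre x m) ! j"
proof (cases "Suc j \<le> m")
  case True
  then have "pre x m = pre x (Suc j) @ pre (sh (Suc j) x) (m - Suc j)"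
    using pre_add[of x "Suc j" "m - Suc j"] by simp
  moreover have "j < length (phi (pre x (Suc j)))"
    using phi_len_ge[of "pre x (Suc j)"] by simp
  ultimately show ?thesis by (simp add: phiw_def nth_append)
next
  case False
  then have "pre x (Suc j) = pre x m @ pre (sh m x) (Suc j - m)"
    using pre_add[of x m "Suc j - m"] by simp
  then show ?thesis using assms by (simp add: phiw_def nth_append)
qed

lemma pre_phiw: "pre (phiw x) (length (phi (pre x m))) = phi (pre x m)"
  by (rule nth_equalityI) (auto simp: phi_prefix_nth)

lemma prep_Nil[simp]: "prep [] x = x" by (simp add: prep_def)
lemma prep_append: "prep (a @ b) x = prep a (prep b x)"
  by (auto simp: prep_def nth_append fun_eq_iff)
lemma sh_prep[simp]: "sh (length w) (prep w x) = x" by (simp add: sh_def prep_def)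
lemma sh_0[simp]: "sh 0 x = x" by (simp add: sh_def)
lemma sh_sh[simp]: "sh a (sh b x) = sh (b + a) x" by (simp add: sh_def add.assoc)
lemma prep_pre_sh: "prep (pre x k) (sh k x) = x"
  by (auto simp: prep_def sh_def fun_eq_iff)
lemma pre_prep: "pre (prep w x) n = take n (w @ pre x n)"
proof (rule nth_equalityI)
  show "length (pre (prep w x) n) = length (take n (w @ pre x n))" by simp
  fix i assume "i < length (pre (prep w x) n)"
  then show "pre (prep w x) n ! i = take n (w @ pre x n) ! i"
    by (auto simp: prep_def nth_append)
qed

lemma phiw_step: "phiw x = prep (phi_letter (x 0)) (phiw (sh 1 x))"
proof
  fix j
  have e: "pre x (Suc (Suc j)) = x 0 # pre (sh 1 x) (Suc j)"
    using pre_add[of x 1 "Suc j"] by (simp add: pre_def)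
  have l: "length (phi_letter (x 0)) \<ge> 1" by (simp add: phi_letter_len)
  have a: "j < length (phi (pre x (Suc (Suc j))))"
    using phi_len_ge[of "pre x (Suc (Suc j))"] by simp
  show "phiw x j = prep (phi_letter (x 0)) (phiw (sh 1 x)) j"
  proof (cases "j < length (phi_letter (x 0))")
    case True
    then show ?thesis using phi_prefix_nth[OF a] e by (simp add: prep_def nth_append)
  next
    case False
    have b: "j - length (phi_letter (x 0)) < length (phi (pre (sh 1 x) (Suc j)))"
      using phi_len_ge[of "pre (sh 1 x) (Suc j)"] l by simp
    show ?thesis using False phi_prefix_nth[OF a] phi_prefix_nth[OF b] e
      by (simp add: prep_def nth_append)
  qed
qed

lemma prep_single_sh: "prep [x 0] (sh 1 x) = x"
  using prep_pre_sh[of x 1] by (simp add: pre_def)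

lemma phiw_prep: "phiw (prep w x) = prep (phi w) (phiw x)"
proof (induction w)
  case Nil then show ?case by simp
next
  case (Cons a w)
  have e: "prep (a # w) x = prep [a] (prep w x)" using prep_append[of "[a]" w x] by simp
  have z: "prep [a] (prep w x) 0 = a" by (simp add: prep_def)
  have "phiw (prep (a # w) x) = prep (phi_letter a) (phiw (prep w x))"
    unfolding e using phiw_step[of "prep [a] (prep w x)"] z
    using sh_prep[of "[a]" "prep w x"] by simp
  then show ?case using Cons by (simp add: prep_append)
qed

lemma sh_phiw: "sh (length (phi (pre x k))) (phiw x) = phiw (sh k x)"
  using phiw_prep[of "pre x k" "sh k x"] by (simp add: prep_pre_sh)

lemma phiw_0[simp]: "phiw x 0 = 1"
  by (subst phiw_step) (simp add: prep_def)

lemma phi_letter_bin: "c \<in> set (phi_letter a) \<Longrightarrow> c \<le> 1"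
  by (cases a) auto
lemma phi_bin: "c \<in> set (phi w) \<Longrightarrow> c \<le> 1"
  by (induction w) (auto dest: phi_letter_bin)

lemma binary_phiw: "binary (phiw x)"
  unfolding binary_def phiw_def
  by (metis phi_bin nth_mem phi_len_ge pre_len Suc_le_lessD order_less_le_trans)




lemma sgn_cond: "((-1::int) ^ (k + 1) * z < 0) \<longleftrightarrow> (if even k then z > 0 else z < 0)"
  by (cases "even k") (auto simp: power_add)

lemma alt_less_iff: "alt_less x y \<longleftrightarrow> (\<exists>k. (\<forall>i<k. x i = y i) \<and>
   (if even k then x k > y k else x k < y k))"
  unfolding alt_less_def sgn_cond by auto

lemma alt_less_irrefl[simp]: "\<not> alt_less x x"
  unfolding alt_less_iff by auto

lemma alt_less_asym: "alt_less x y \<Longrightarrow> \<not> alt_less y x"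
proof
  assume "alt_less x y" "alt_less y x"
  then obtain k1 k2 where a: "\<forall>i<k1. x i = y i" "if even k1 then x k1 > y k1 else x k1 < y k1"
    and b: "\<forall>i<k2. y i = x i" "if even k2 then y k2 > x k2 else y k2 < x k2"
    unfolding alt_less_iff by blast
  consider "k1 < k2" | "k2 < k1" | "k1 = k2" by linarith
  then show False
  proof cases
    case 1 then show ?thesis using a b by (auto split: if_splits)
  next
    case 2 then show ?thesis using a b by (auto split: if_splits)
  next
    case 3 then show ?thesis using a b by (auto split: if_splits)
  qed
qed

lemma alt_less_total: "x \<noteq> y \<Longrightarrow> alt_less x y \<or> alt_less y x"
proof -
  assume "x \<noteq> y"
  then obtain j where "x j \<noteq> y j" by auto
  define k where "k = (LEAST i. x i \<noteq> y i)"
  have k1: "x k \<noteq> y k" unfolding k_def by (rule LeastI) fact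
  have k2: "\<forall>i<k. x i = y i" unfolding k_def using not_less_Least by blast
  show ?thesis
  proof (cases "(if even k then x k > y k else x k < y k)")
    case True
    then have "alt_less x y" unfolding alt_less_iff using k2 by (intro exI[of _ k]) auto
    then show ?thesis by blast
  next
    case False
    then have "if even k then y k > x k else y k < x k" using k1 by (auto split: if_splits)
    then have "alt_less y x" unfolding alt_less_iff using k2 by (intro exI[of _ k]) auto
    then show ?thesis by blast
  qed
qed

lemma alt_le_not_less: "alt_le d s \<Longrightarrow> \<not> alt_less s d"
  unfolding alt_le_def using alt_less_asym by auto

lemma not_alt_le: "\<not> alt_le d s \<Longrightarrow> alt_less s d"
  unfolding alt_le_def using alt_less_total by auto

lemma alt_less_prep1: "alt_less (prep [a] x) (prep [a] y) \<longleftrightarrow> alt_less y x"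
proof
  assume "alt_less (prep [a] x) (prep [a] y)"
  then obtain k where k: "\<forall>i<k. prep [a] x i = prep [a] y i"
    "if even k then prep [a] x k > prep [a] y k else prep [a] x k < prep [a] y k"
    unfolding alt_less_iff by blast
  have "k \<noteq> 0"
  proof
    assume "k = 0" then show False using k(2) by (simp add: prep_def)
  qed
  then obtain k' where kk: "k = Suc k'" by (cases k) auto
  have "\<forall>i<k'. y i = x i" using k(1) kk by (auto simp: prep_def)
  moreover have "if even k' then y k' > x k' else y k' < x k'"
    using k(2) kk by (auto simp: prep_def split: if_splits)
  ultimately show "alt_less y x" unfolding alt_less_iff by blast
next
  assume "alt_less y x"
  then obtain k where k: "\<forall>i<k. y i = x i" "if even k then y k > x k else y k < x k"
    unfolding alt_less_iff by blast
  have "\<forall>i<Suc k. prep [a] x i = prep [a] y i"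
    using k(1) by (auto simp: prep_def less_Suc_eq_0_disj)
  moreover have "if even (Suc k) then prep [a] x (Suc k) > prep [a] y (Suc k)
      else prep [a] x (Suc k) < prep [a] y (Suc k)"
    using k(2) by (auto simp: prep_def split: if_splits)
  ultimately show "alt_less (prep [a] x) (prep [a] y)" unfolding alt_less_iff by blast
qed

lemma alt_less_prep: "alt_less (prep w x) (prep w y) \<longleftrightarrow>
   (if even (length w) then alt_less x y else alt_less y x)"
proof (induction w arbitrary: x y)
  case Nil then show ?case by simp
next
  case (Cons a w)
  have "prep (a # w) z = prep [a] (prep w z)" for z using prep_append[of "[a]" w z] by simp
  then show ?case using Cons alt_less_prep1 by simp
qed

lemma phi_letter_odd: "odd (length (phi_letter a))" by (simp add: phi_letter_len)

lemma phiw_mono_aux: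
  "\<forall>x y. binary x \<longrightarrow> binary y \<longrightarrow> (\<forall>i<k. x i = y i) \<longrightarrow>
     (if even k then x k > y k else x k < y k) \<longrightarrow> alt_less (phiw x) (phiw y)"
proof (induction k)
  case 0
  show ?case
  proof (intro allI impI)
    fix x y assume bx: "binary x" and by': "binary y" and "\<forall>i<0. x i = y i"
      and c: "if even (0::nat) then x 0 > y 0 else x 0 < y 0"
    then have x0: "x 0 = 1" and y0: "y 0 = 0" unfolding binary_def
      by (metis le_antisym less_one not_le_imp_less not_less_zero even_zero)+
    have px: "phiw x = prep [1,0,0] (phiw (sh 1 x))"
      using phiw_step[of x] x0 by simp
    have py: "phiw y = prep [1] (phiw (sh 1 y))"
      using phiw_step[of y] y0 by simp
    have "\<forall>i<1. phiw x i = phiw y i" unfolding px py by (simp add: prep_def)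
    moreover have "if even (1::nat) then phiw x 1 > phiw y 1 else phiw x 1 < phiw y 1"
      unfolding px py by (simp add: prep_def)
    ultimately show "alt_less (phiw x) (phiw y)" unfolding alt_less_iff by blast
  qed
next
  case (Suc k)
  show ?case
  proof (intro allI impI)
    fix x y assume bx: "binary x" and by': "binary y" and ag: "\<forall>i<Suc k. x i = y i"
      and c: "if even (Suc k) then x (Suc k) > y (Suc k) else x (Suc k) < y (Suc k)"
    have e0: "x 0 = y 0" using ag by auto
    have "binary (sh 1 y)" "binary (sh 1 x)" using bx by' by (auto simp: binary_def sh_def)
    moreover have "\<forall>i<k. sh 1 y i = sh 1 x i" using ag by (auto simp: sh_def)
    moreover have "if even k then sh 1 y k > sh 1 x k else sh 1 y k < sh 1 x k"
      using c by (auto simp: sh_def split: if_splits)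
    ultimately have "alt_less (phiw (sh 1 y)) (phiw (sh 1 x))" using Suc.IH by blast
    then show "alt_less (phiw x) (phiw y)"
      using phiw_step[of x] phiw_step[of y] e0 alt_less_prep[of "phi_letter (x 0)"] phi_letter_odd
      by simp
  qed
qed

lemma phiw_mono: "binary x \<Longrightarrow> binary y \<Longrightarrow> alt_less x y \<Longrightarrow> alt_less (phiw x) (phiw y)"
  using phiw_mono_aux unfolding alt_less_iff by blast

lemma phiw_mono_le: "binary x \<Longrightarrow> binary y \<Longrightarrow> alt_le x y \<Longrightarrow> alt_le (phiw x) (phiw y)"
  unfolding alt_le_def using phiw_mono by blast

lemma alt_less_start0: "d 0 = 1 \<Longrightarrow> s 0 = 0 \<Longrightarrow> alt_less d s"
  unfolding alt_less_iff by (rule exI[of _ 0]) auto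




lemma sub_mult:
  fixes a :: "nat \<Rightarrow> real"
  assumes sub: "\<And>m n. a (m + n) \<le> a m + a n"
  shows "a (q * m + r) \<le> real q * a m + a r"
proof (induction q)
  case 0 then show ?case by simp
next
  case (Suc q)
  have "a (Suc q * m + r) = a (m + (q * m + r))" by (simp add: algebra_simps)
  also have "\<dots> \<le> a m + a (q * m + r)" by (rule sub)
  also have "\<dots> \<le> a m + (real q * a m + a r)" using Suc by simp
  finally show ?case by (simp add: algebra_simps)
qed

lemma fekete:
  fixes a :: "nat \<Rightarrow> real"
  assumes sub: "\<And>m n. a (m + n) \<le> a m + a n" and nn: "\<And>n. a n \<ge> 0"
  shows "\<exists>h. (\<lambda>n. a n / real n) \<longlonglongrightarrow> h"
proof -
  define S where "S = (\<lambda>n. a (Suc n) / real (Suc n)) ` UNIV"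
  define h where "h = Inf S"
  have bdd: "bdd_below S" unfolding S_def using nn
    by (intro bdd_belowI[of _ 0]) auto
  have low: "h \<le> a n / real n" if n1: "n \<ge> 1" for n
  proof -
    obtain n' where "n = Suc n'" using n1 by (cases n) simp_all
    then have "a n / real n \<in> S" unfolding S_def by auto
    then show ?thesis unfolding h_def using bdd by (rule cInf_lower)
  qed
  have "(\<lambda>n. a n / real n) \<longlonglongrightarrow> h"
  proof (rule LIMSEQ_I)
    fix r :: real assume r: "r > 0"
    have "S \<noteq> {}" unfolding S_def by auto
    then obtain s where "s \<in> S" "s < h + r / 2" unfolding h_def
      using cInf_lessD[of S "h + r/2"] r h_def by auto
    then obtain m where m1: "m \<ge> 1" and ms: "a m / real m < h + r / 2"
    proof -
      from \<open>s \<in> S\<close> obtain j where "s = a (Suc j) / real (Suc j)" unfolding S_def by auto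
      then show ?thesis using that[of "Suc j"] \<open>s < h + r / 2\<close> by simp
    qed
    define C where "C = (\<Sum>i<m. a i)"
    have C0: "C \<ge> 0" unfolding C_def using nn by (simp add: sum_nonneg)
    have Cb: "a i \<le> C" if "i < m" for i
    proof -
      have "a i = (\<Sum>j\<in>{i}. a j)" by simp
      also have "\<dots> \<le> C" unfolding C_def using that nn
        by (intro sum_mono2) auto
      finally show ?thesis .
    qed
    obtain N :: nat where N: "real N > 2 * C / r" using reals_Archimedean2 by blast
    show "\<exists>no. \<forall>n\<ge>no. norm (a n / real n - h) < r"
    proof (intro exI allI impI)
      fix n assume nN: "n \<ge> Suc N"
      then have n1: "n \<ge> 1" and npos: "real n > 0" by auto
      define q where "q = n div m"
      define rr where "rr = n mod m"
      have ndec: "n = q * m + rr" unfolding q_def rr_def by simp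
      have rrm: "rr < m" unfolding rr_def using m1 by simp
      have "a n \<le> real q * a m + a rr" using sub_mult[of a q m rr, OF sub] ndec by simp
      also have "\<dots> \<le> real q * a m + C" using Cb rrm by simp
      finally have an: "a n \<le> real q * a m + C" .
      have qm: "real q * real m \<le> real n" using ndec by (metis of_nat_le_iff of_nat_mult le_add1)
      have "real q * a m = (real q * real m) * (a m / real m)" using m1 by simp
      also have "\<dots> \<le> real n * (a m / real m)"
        using qm nn[of m] m1 by (intro mult_right_mono) auto
      finally have "a n \<le> real n * (a m / real m) + C" using an by simp
      then have "a n / real n \<le> a m / real m + C / real n"
        using npos by (simp add: field_simps)
      moreover have "C / real n < r / 2"
      proof -
        have "real n > 2 * C / r" using N nN by simp
        then have "2 * C < r * real n" using r by (simp add: field_simps)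
        then show ?thesis using npos by (simp add: field_simps)
      qed
      ultimately have up: "a n / real n < h + r" using ms by linarith
      have "h \<le> a n / real n" using low n1 by simp
      then show "norm (a n / real n - h) < r" using up by simp
    qed
  qed
  then show ?thesis by blast
qed




lemma sh_closed: "x \<in> alt_lyndon d \<Longrightarrow> sh k x \<in> alt_lyndon d"
  unfolding alt_lyndon_def sh_def
proof (safe)
  fix i assume "\<forall>i. x i \<le> d 0" then show "x (k + i) \<le> d 0" by blast
next
  fix ka assume "\<forall>k. alt_le d (\<lambda>i. x (k + i))"
  then have "alt_le d (\<lambda>i. x ((k + ka) + i))" by blast
  then show "alt_le d (\<lambda>i. x (k + (ka + i)))" by (simp add: add.assoc)
qed

lemma factors_alt: "factors (alt_lyndon d) n = (\<lambda>x. pre x n) ` alt_lyndon d"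
proof
  show "factors (alt_lyndon d) n \<subseteq> (\<lambda>x. pre x n) ` alt_lyndon d"
  proof
    fix w assume "w \<in> factors (alt_lyndon d) n"
    then obtain x k where "x \<in> alt_lyndon d" "w = map (\<lambda>i. x (k + i)) [0..<n]"
      unfolding factors_def by auto
    then have "w = pre (sh k x) n" "sh k x \<in> alt_lyndon d"
      by (auto simp: pre_def sh_def intro: sh_closed[of x d k, unfolded sh_def])
    then show "w \<in> (\<lambda>x. pre x n) ` alt_lyndon d" by blast
  qed
next
  show "(\<lambda>x. pre x n) ` alt_lyndon d \<subseteq> factors (alt_lyndon d) n"
    unfolding factors_def pre_def by (auto intro!: bexI[of _ 0] exI[of _ 0])
qed

lemma factors_sub_lists: "factors (alt_lyndon d) n \<subseteq> {w. set w \<subseteq> {0..d 0} \<and> length w = n}"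
  unfolding factors_alt by (auto simp: alt_lyndon_def pre_def)

lemma finite_factors: "finite (factors (alt_lyndon d) n)"
  by (rule finite_subset[OF factors_sub_lists]) (simp add: finite_lists_length_eq)

lemma card_factors_ge1: "x \<in> alt_lyndon d \<Longrightarrow> card (factors (alt_lyndon d) n) \<ge> 1"
proof -
  assume "x \<in> alt_lyndon d"
  then have "pre x n \<in> factors (alt_lyndon d) n" unfolding factors_alt by blast
  then show ?thesis using finite_factors
    by (metis One_nat_def Suc_leI card_gt_0_iff empty_iff)
qed

lemma card_factors_submult:
  "card (factors (alt_lyndon d) (m + n)) \<le> card (factors (alt_lyndon d) m) * card (factors (alt_lyndon d) n)"
proof -
  let ?F = "factors (alt_lyndon d)"
  have "?F (m + n) \<subseteq> (\<lambda>(a, b). a @ b) ` (?F m \<times> ?F n)"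
  proof
    fix w assume "w \<in> ?F (m + n)"
    then obtain x where x: "x \<in> alt_lyndon d" "w = pre x (m + n)" unfolding factors_alt by blast
    then have "w = pre x m @ pre (sh m x) n" by (simp add: pre_add)
    moreover have "pre x m \<in> ?F m" "pre (sh m x) n \<in> ?F n"
      using x sh_closed unfolding factors_alt by blast+
    ultimately show "w \<in> (\<lambda>(a, b). a @ b) ` (?F m \<times> ?F n)" by force
  qed
  then have "card (?F (m + n)) \<le> card ((\<lambda>(a, b). a @ b) ` (?F m \<times> ?F n))"
    by (intro card_mono finite_imageI finite_cartesian_product finite_factors)
  also have "\<dots> \<le> card (?F m \<times> ?F n)" by (rule card_image_le) (simp add: finite_factors)
  finally show ?thesis by (simp add: card_cartesian_product)
qed

lemma entropy_pos:
  assumes x: "x \<in> alt_lyndon d" and L: "L \<ge> 1"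
    and lb: "\<And>k. card (factors (alt_lyndon d) (k * L)) \<ge> 2 ^ k"
  shows "\<exists>h>0. entropy_tends (alt_lyndon d) h"
proof -
  define H where "H n = real (card (factors (alt_lyndon d) n))" for n
  define a where "a n = ln (H n)" for n
  have H1: "H n \<ge> 1" for n unfolding H_def using card_factors_ge1[OF x] by simp
  have nn: "a n \<ge> 0" for n unfolding a_def using H1 by simp
  have sub: "a (m + n) \<le> a m + a n" for m n
  proof -
    have "H (m + n) \<le> H m * H n" unfolding H_def
      using card_factors_submult[of d m n] by (metis of_nat_le_iff of_nat_mult)
    moreover have p1: "0 < H (m+n)" using H1[of "m+n"] by linarith
    moreover have p2: "0 < H m * H n" using H1[of m] H1[of n]
      by (metis less_le_trans mult_pos_pos zero_less_one)
    ultimately have "ln (H (m + n)) \<le> ln (H m * H n)" by simp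
    also have "\<dots> = ln (H m) + ln (H n)" using H1[of m] H1[of n] by (subst ln_mult) auto
    finally show ?thesis unfolding a_def .
  qed
  obtain h where h: "(\<lambda>n. a n / real n) \<longlonglongrightarrow> h" using fekete[of a, OF sub nn] by blast
  define f where "f k = Suc k * L" for k
  have sm: "strict_mono f" unfolding f_def using L by (intro strict_monoI) auto
  have hs: "((\<lambda>n. a n / real n) \<circ> f) \<longlonglongrightarrow> h" using LIMSEQ_subseq_LIMSEQ[OF h sm] .
  have "ln 2 / real L \<le> ((\<lambda>n. a n / real n) \<circ> f) k" for k
  proof -
    have "real (2 ^ Suc k) \<le> H (Suc k * L)" unfolding H_def using lb[of "Suc k"]
      by (metis of_nat_le_iff)
    then have "ln (2 ^ Suc k) \<le> a (Suc k * L)" unfolding a_def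
      using H1[of "Suc k * L"] by (subst ln_le_cancel_iff) auto
    moreover have "ln ((2::real) ^ Suc k) = real (Suc k) * ln 2" by (rule ln_realpow)
    ultimately have "real (Suc k) * ln 2 \<le> a (Suc k * L)" by simp
    then have "real (Suc k) * ln 2 / (real (Suc k) * real L) \<le> a (Suc k * L) / (real (Suc k) * real L)"
      using L by (intro divide_right_mono) auto
    moreover have "real (Suc k) * ln 2 / (real (Suc k) * real L) = ln 2 / real L" by simp
    moreover have "real (Suc k * L) = real (Suc k) * real L" by (simp only: of_nat_mult)
    ultimately show ?thesis unfolding f_def o_def by metis
  qed
  then have "ln 2 / real L \<le> h" by (intro LIMSEQ_le_const[OF hs]) auto
  moreover have "ln 2 / real L > 0" using L by simp
  ultimately have "h > 0" by linarith
  moreover have "entropy_tends (alt_lyndon d) h"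
    unfolding entropy_tends_def using h unfolding a_def H_def .
  ultimately show ?thesis by blast
qed




definition per :: "nat list \<Rightarrow> nat \<Rightarrow> nat" where
  "per q i = q ! (i mod length q)"

lemma ep_prep: "eventually_periodic p q = prep p (per q)"
  by (auto simp: eventually_periodic_def prep_def per_def fun_eq_iff)

lemma per_fix: "q \<noteq> [] \<Longrightarrow> prep q (per q) = per q"
proof
  fix i assume "q \<noteq> []"
  show "prep q (per q) i = per q i"
  proof (cases "i < length q")
    case True then show ?thesis by (simp add: prep_def per_def)
  next
    case False
    then have "i mod length q = (i - length q) mod length q"
      by (simp add: mod_if)
    then show ?thesis using False by (simp add: prep_def per_def)
  qed
qed

lemma fix_unique:
  assumes w: "w \<noteq> []" and x: "x = prep w x" and y: "y = prep w y"
  shows "x = y"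
proof
  fix i show "x i = y i"
  proof (induction i rule: less_induct)
    case (less i)
    show ?case
    proof (cases "i < length w")
      case True then show ?thesis using x y by (metis prep_def)
    next
      case False
      then have "i - length w < i" using w by (cases w) auto
      then have "x (i - length w) = y (i - length w)" using less by blast
      then show ?thesis using x y False by (metis prep_def)
    qed
  qed
qed

lemma phiw_per: "q \<noteq> [] \<Longrightarrow> phiw (per q) = per (phi q)"
proof -
  assume q: "q \<noteq> []"
  have a: "phiw (per q) = prep (phi q) (phiw (per q))"
    using phiw_prep[of q "per q"] per_fix[OF q] by simp
  have q': "phi q \<noteq> []" using q by simp
  show ?thesis using fix_unique[OF q' a per_fix[OF q', symmetric]] .
qed

lemma phiw_ep: "q \<noteq> [] \<Longrightarrow>
  phiw (eventually_periodic p q) = eventually_periodic (phi p) (phi q)"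
  by (simp add: ep_prep phiw_prep phiw_per)

lemma u_Suc: "u (Suc n) = phi (u n)" by (simp add: u_def)
lemma u_0: "u 0 = [1]" by (simp add: u_def)
lemma v_Suc: "v (Suc n) = phi (v n)"
  by (cases n) (auto simp: v_def u_def)
lemma u_ne: "u n \<noteq> []" by (induction n) (auto simp: u_0 u_Suc)
lemma v_ne: "v n \<noteq> []" by (simp add: v_def u_ne)

definition d0 :: "nat \<Rightarrow> nat" where "d0 = eventually_periodic [1] [0,0]"

lemma dn: "eventually_periodic (u n) (v n) = (phiw ^^ n) d0"
proof (induction n)
  case 0 then show ?case by (simp add: d0_def u_0 v_def)
next
  case (Suc n)
  then show ?case by (simp add: u_Suc v_Suc phiw_ep[OF v_ne, symmetric])
qed

lemma two_zero: "[0::nat, 0] ! (m mod Suc (Suc 0)) = 0"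
proof -
  have "m mod Suc (Suc 0) < Suc (Suc 0)" by simp
  then show ?thesis by (cases "m mod Suc (Suc 0)") (auto simp: less_Suc_eq)
qed
lemma d0_val: "d0 i = (if i = 0 then 1 else 0)"
  by (simp add: d0_def eventually_periodic_def two_zero)

lemma binary_d0: "binary d0" by (simp add: binary_def d0_val)

lemma sh_phiw_cases: "\<exists>i. sh k (phiw x) = phiw (sh i x) \<or> phiw x k = 0"
proof (induction k arbitrary: x rule: less_induct)
  case (less k)
  show ?case
  proof (cases "k = 0")
    case True then show ?thesis by (intro exI[of _ 0]) simp
  next
    case k0: False
    define l where "l = length (phi_letter (x 0))"
    have px: "phiw x = prep (phi_letter (x 0)) (phiw (sh 1 x))" by (rule phiw_step)
    show ?thesis
    proof (cases "k < l")
      case True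
      then have "x 0 \<noteq> 0" "k = 1 \<or> k = 2" using k0 unfolding l_def
        by (auto simp: phi_letter_len split: if_splits)
      then have "phiw x k = 0" using px
        by (cases "x 0") (auto simp: prep_def)
      then show ?thesis by blast
    next
      case False
      have l1: "l \<ge> 1" unfolding l_def by (simp add: phi_letter_len)
      then have "k - l < k" using k0 by simp
      then obtain i where i: "sh (k - l) (phiw (sh 1 x)) = phiw (sh i (sh 1 x))
          \<or> phiw (sh 1 x) (k - l) = 0" using less by blast
      have e1: "sh k (phiw x) = sh (k - l) (phiw (sh 1 x))"
      proof -
        have "sh k (phiw x) = sh (k - l) (sh l (phiw x))" using False by simp
        also have "sh l (phiw x) = phiw (sh 1 x)" unfolding l_def
          by (subst px) (rule sh_prep)
        finally show ?thesis .
      qed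
      have e2: "phiw x k = phiw (sh 1 x) (k - l)"
        using e1 by (metis add_0_right sh_def)
      show ?thesis using i e1 e2 by auto
    qed
  qed
qed

lemma base_in: "binary y \<Longrightarrow> phiw y \<in> alt_lyndon d0"
  unfolding alt_lyndon_def
proof (safe)
  fix i show "phiw y i \<le> d0 0" using binary_phiw by (simp add: binary_def d0_val)
next
  fix k assume by': "binary y"
  obtain i where i: "sh k (phiw y) = phiw (sh i y) \<or> phiw y k = 0"
    using sh_phiw_cases by blast
  show "alt_le d0 (\<lambda>j. phiw y (k + j))"
  proof (cases "phiw y k = 0")
    case True
    then have "alt_less d0 (sh k (phiw y))" by (intro alt_less_start0) (auto simp: d0_val sh_def)
    then show ?thesis by (simp add: alt_le_def sh_def)
  next
    case False
    then have s: "sh k (phiw y) = phiw (sh i y)" using i by auto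
    define z where "z = sh i y"
    have zb: "z 0 \<le> 1" using by' by (simp add: z_def binary_def sh_def)
    have pz: "phiw z = prep (phi_letter (z 0)) (phiw (sh 1 z))" by (rule phiw_step)
    have "alt_less d0 (phiw z)"
    proof (cases "z 0 = 0")
      case True
      then have pz': "phiw z = prep [1] (phiw (sh 1 z))" using pz by simp
      show ?thesis unfolding alt_less_iff
        by (rule exI[of _ 1]) (simp add: pz' prep_def d0_val)
    next
      case False
      then have "z 0 = 1" using zb by simp
      then have pz': "phiw z = prep [1,0,0] (phiw (sh 1 z))" using pz by simp
      have lt: "\<forall>j<3. d0 j = phiw z j"
        by (auto simp: pz' prep_def d0_val less_Suc_eq)
      show ?thesis unfolding alt_less_iff
        by (rule exI[of _ 3]) (use lt in \<open>simp add: pz' prep_def d0_val\<close>)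
    qed
    then show ?thesis using s unfolding z_def by (simp add: alt_le_def sh_def)
  qed
qed

lemma up_in:
  assumes db: "binary d" and d1: "d 0 = 1" and x: "x \<in> alt_lyndon d"
  shows "phiw x \<in> alt_lyndon (phiw d)"
  unfolding alt_lyndon_def
proof (safe)
  fix i show "phiw x i \<le> phiw d 0" using binary_phiw by (simp add: binary_def)
next
  fix k
  have xb: "binary x" using x d1 by (simp add: alt_lyndon_def binary_def)
  obtain i where i: "sh k (phiw x) = phiw (sh i x) \<or> phiw x k = 0"
    using sh_phiw_cases by blast
  show "alt_le (phiw d) (\<lambda>j. phiw x (k + j))"
  proof (cases "phiw x k = 0")
    case True
    then have "alt_less (phiw d) (sh k (phiw x))" by (intro alt_less_start0) (auto simp: sh_def)
    then show ?thesis by (simp add: alt_le_def sh_def)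
  next
    case False
    then have s: "sh k (phiw x) = phiw (sh i x)" using i by auto
    have "alt_le d (sh i x)" using x by (simp add: alt_lyndon_def sh_def)
    moreover have "binary (sh i x)" using xb by (simp add: binary_def sh_def)
    ultimately have "alt_le (phiw d) (phiw (sh i x))" using phiw_mono_le db by blast
    then show ?thesis using s by (simp add: sh_def)
  qed
qed

lemma binary_iter: "binary ((phiw ^^ n) d0) \<and> (phiw ^^ n) d0 0 = 1"
  by (cases n) (auto simp: binary_d0 d0_val binary_phiw)

lemma iter_in: "binary y \<Longrightarrow> (phiw ^^ Suc n) y \<in> alt_lyndon ((phiw ^^ n) d0)"
proof (induction n)
  case 0 then show ?case by (simp add: base_in)
next
  case (Suc n)
  then show ?case using up_in[of "(phiw ^^ n) d0" "(phiw ^^ Suc n) y"] binary_iter[of n]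
    by simp
qed




definition blk :: "bool \<Rightarrow> nat list" where
  "blk b = (if b then [1,0,0] else [0,0,1])"

fun yb :: "bool list \<Rightarrow> nat \<Rightarrow> nat" where
  "yb [] = (\<lambda>_. 0)"
| "yb (b # bs) = prep (blk b) (yb bs)"

lemma binary_yb: "binary (yb bs)"
  by (induction bs) (auto simp: binary_def prep_def blk_def nth_Cons')

lemma take_pre: "m \<le> n \<Longrightarrow> take m (pre x n) = pre x m"
  by (simp add: pre_def take_map)

lemma pre_yb: "pre (yb bs) (3 * length bs) = concat (map blk bs)"
proof (induction bs)
  case Nil then show ?case by (simp add: pre_def)
next
  case (Cons b bs)
  have l: "length (blk b) = 3" by (simp add: blk_def)
  have "pre (yb (b # bs)) (3 * length (b # bs)) =
        take (3 + 3 * length bs) (blk b @ pre (yb bs) (3 + 3 * length bs))"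
    by (simp add: pre_prep)
  also have "\<dots> = blk b @ take (3 * length bs) (pre (yb bs) (3 + 3 * length bs))"
    using l by simp
  also have "\<dots> = blk b @ pre (yb bs) (3 * length bs)" by (simp add: take_pre)
  finally show ?case using Cons by simp
qed

lemma phin_app: "(phi ^^ m) (a @ b) = (phi ^^ m) a @ (phi ^^ m) b"
  by (induction m) auto
lemma phin_Nil: "(phi ^^ m) [] = []"
  by (induction m) auto
lemma phin_concat: "(phi ^^ m) (concat ws) = concat (map (phi ^^ m) ws)"
  by (induction ws) (auto simp: phin_app phin_Nil)

lemma pre_phiw_iter:
  "pre ((phiw ^^ m) x) (length ((phi ^^ m) (pre x j))) = (phi ^^ m) (pre x j)"
proof (induction m)
  case 0 then show ?case by simp
next
  case (Suc m)
  have "(phi ^^ Suc m) (pre x j) = phi (pre ((phiw ^^ m) x) (length ((phi ^^ m) (pre x j))))"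
    using Suc by simp
  then show ?case using pre_phiw[of "(phiw ^^ m) x" "length ((phi ^^ m) (pre x j))"] by simp
qed

lemma phi_binlist: "set (phi w) \<subseteq> {0, 1}"
  using phi_bin by fastforce

lemma phi_last: "phi (xs @ [a]) = phi xs @ phi_letter a" by simp

lemma phi_inj: "set xs \<subseteq> {0,1} \<Longrightarrow> set ys \<subseteq> {0,1} \<Longrightarrow> phi xs = phi ys \<Longrightarrow> xs = ys"
proof (induction xs arbitrary: ys rule: rev_induct)
  case Nil then show ?case by (metis phi_eq_Nil)
next
  case (snoc a xs)
  have "ys \<noteq> []" using snoc.prems(3) by (metis phi_eq_Nil snoc_eq_iff_butlast)
  then obtain ys' b where ys: "ys = ys' @ [b]" by (metis rev_exhaust)
  have e: "phi xs @ phi_letter a = phi ys' @ phi_letter b" using snoc.prems(3) ys by simp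
  have ab: "a \<in> {0,1}" "b \<in> {0,1}" using snoc.prems ys by auto
  have "last (phi_letter a) = last (phi_letter b)" using e by (metis last_appendR phi_letter_ne)
  then have "a = b" using ab by auto
  then have "phi xs = phi ys'" using e by simp
  then have "xs = ys'" using snoc.IH snoc.prems ys by auto
  then show ?case using ys \<open>a = b\<close> by simp
qed

lemma phin_binlist: "set ((phi ^^ m) w) \<subseteq> {0,1}" if "set w \<subseteq> {0,1}"
proof (cases m)
  case 0 then show ?thesis using that by simp
next
  case (Suc m') then show ?thesis using phi_binlist[of "(phi ^^ m') w"] by simp
qed

lemma phin_inj: "set xs \<subseteq> {0,1} \<Longrightarrow> set ys \<subseteq> {0,1} \<Longrightarrow> (phi ^^ m) xs = (phi ^^ m) ys \<Longrightarrow> xs = ys"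
proof (induction m)
  case 0 then show ?case by simp
next
  case (Suc m)
  then show ?case using phi_inj[OF phin_binlist phin_binlist] by simp
qed

lemma concat_inj:
  assumes "\<And>b. length (f b) = L" "\<And>b c. f b = f c \<Longrightarrow> b = c"
  shows "length bs = length cs \<Longrightarrow> concat (map f bs) = concat (map f cs) \<Longrightarrow> bs = cs"
proof (induction bs arbitrary: cs)
  case Nil then show ?case by simp
next
  case (Cons b bs)
  then obtain c cs' where cs: "cs = c # cs'" by (cases cs) auto
  have "f b @ concat (map f bs) = f c @ concat (map f cs')" using Cons.prems cs by simp
  then have "f b = f c" "concat (map f bs) = concat (map f cs')"
    using assms(1) by (auto simp: append_eq_append_conv)
  then show ?case using Cons assms(2) cs by auto
qed

lemma lower_count:
  "card (factors (alt_lyndon ((phiw ^^ n) d0)) (k * length ((phi ^^ Suc n) [1,0,0]))) \<ge> 2 ^ k"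
proof -
  define m where "m = Suc n"
  define L where "L = length ((phi ^^ m) [1,0,0])"
  define f where "f b = (phi ^^ m) (blk b)" for b
  define F where "F bs = concat (map f bs)" for bs
  define M where "M = alt_lyndon ((phiw ^^ n) d0)"
  have P: "(phi ^^ m) [1,0,0] = (phi ^^ m) [1] @ (phi ^^ m) [0] @ (phi ^^ m) [0]"
    using phin_app[of m "[1]" "[0,0]"] phin_app[of m "[0]" "[0]"] by simp
  have Q: "(phi ^^ m) [0,0,1] = (phi ^^ m) [0] @ (phi ^^ m) [0] @ (phi ^^ m) [1]"
    using phin_app[of m "[0]" "[0,1]"] phin_app[of m "[0]" "[1]"] by simp
  have fl: "length (f b) = L" for b unfolding f_def L_def blk_def using P Q by auto
  have fi: "b = c" if "f b = f c" for b c
  proof (rule ccontr)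
    assume "b \<noteq> c"
    then have "blk b \<noteq> blk c" by (cases b; cases c) (auto simp: blk_def)
    moreover have "set (blk b) \<subseteq> {0,1}" "set (blk c) \<subseteq> {0,1}" by (auto simp: blk_def)
    ultimately show False using that phin_inj unfolding f_def by blast
  qed
  let ?S = "{bs :: bool list. set bs \<subseteq> UNIV \<and> length bs = k}"
  have sub: "F ` ?S \<subseteq> factors M (k * L)"
  proof
    fix w assume "w \<in> F ` ?S"
    then obtain bs where bs: "length bs = k" "w = F bs" by auto
    have "w = (phi ^^ m) (concat (map blk bs))"
      unfolding bs F_def f_def by (simp add: phin_concat o_def)
    also have "\<dots> = (phi ^^ m) (pre (yb bs) (3 * length bs))" by (simp add: pre_yb)
    finally have w: "w = pre ((phiw ^^ m) (yb bs)) (length w)"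
      using pre_phiw_iter[of m "yb bs" "3 * length bs"] by simp
    have "map (length \<circ> f) bs = map (\<lambda>_. L) bs" using fl by (simp add: o_def)
    then have "sum_list (map (length \<circ> f) bs) = k * L" using bs
      by (simp only: sum_list_triv) simp
    then have lw: "length w = k * L" unfolding bs F_def
      by (simp add: length_concat)
    have "(phiw ^^ m) (yb bs) \<in> M" unfolding M_def m_def by (rule iter_in[OF binary_yb])
    then show "w \<in> factors M (k * L)" unfolding factors_alt M_def using w lw
      unfolding M_def by (metis image_eqI)
  qed
  have inj: "inj_on F ?S" unfolding F_def
    by (intro inj_onI) (auto intro: concat_inj[OF fl fi])
  have "card ?S = card (UNIV :: bool set) ^ k" by (rule card_lists_length_eq) simp
  then have "2 ^ k = card ?S" by simp
  also have "\<dots> = card (F ` ?S)" using card_image[OF inj] by simp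
  also have "\<dots> \<le> card (factors M (k * L))" unfolding M_def by (intro card_mono[OF finite_factors]) (use sub in \<open>simp add: M_def\<close>)
  finally show ?thesis unfolding M_def L_def m_def .
qed




lemma u_hd': "\<exists>r. u n = 1 # r"
proof (induction n)
  case 0 then show ?case by (simp add: u_0)
next
  case (Suc n)
  then obtain r where "u n = 1 # r" by blast
  then have "u (Suc n) = phi (1 # r)" by (simp add: u_Suc)
  then show ?case by simp
qed

lemma u_hd: "u n = 1 # tl (u n)"
  using u_hd'[of n] by auto

lemma u_len: "length (u n) \<ge> Suc n"
proof (induction n)
  case 0 then show ?case by (simp add: u_0)
next
  case (Suc n)
  obtain r where r: "u n = 1 # r" using u_hd' by blast
  have "u (Suc n) = [1,0,0] @ phi r" by (simp add: u_Suc r)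
  then have "length (u (Suc n)) \<ge> 3 + length r" using phi_len_ge[of r] by simp
  then show ?case using Suc r by simp
qed

definition pfx :: "nat list \<Rightarrow> nat list \<Rightarrow> bool" where
  "pfx a b \<longleftrightarrow> (\<exists>r. b = a @ r)"

lemma u_prefix1: "pfx (u n) (u (Suc n))"
proof (induction n)
  case 0 then show ?case by (simp add: u_def pfx_def)
next
  case (Suc n)
  then obtain r where "u (Suc n) = u n @ r" by (auto simp: pfx_def)
  then show ?case by (simp add: u_Suc pfx_def)
qed

lemma u_prefix: "n \<le> m \<Longrightarrow> pfx (u n) (u m)"
proof (induction m)
  case 0 then show ?case by (simp add: pfx_def)
next
  case (Suc m)
  show ?case
  proof (cases "n = Suc m")
    case True then show ?thesis by (simp add: pfx_def)
  next
    case False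
    then have "pfx (u n) (u m)" using Suc by simp
    then show ?thesis using u_prefix1[of m] unfolding pfx_def by auto
  qed
qed

lemma prefix_nth: "pfx a b \<Longrightarrow> j < length a \<Longrightarrow> a ! j = b ! j"
  by (auto simp: pfx_def nth_append)

lemma phi_inf_nth: "j < length (u m) \<Longrightarrow> phi_inf j = u m ! j"
proof -
  assume j: "j < length (u m)"
  have j2: "j < length (u (Suc j))" using u_len[of "Suc j"] by simp
  show ?thesis
  proof (cases "Suc j \<le> m")
    case True then show ?thesis using prefix_nth[OF u_prefix[OF True] j2] by (simp add: phi_inf_def)
  next
    case False
    then have "m \<le> Suc j" by simp
    then show ?thesis using prefix_nth[OF u_prefix[of m "Suc j"] j] by (simp add: phi_inf_def)
  qed
qed

lemma pre_phi_inf: "pre phi_inf (length (u m)) = u m"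
  by (rule nth_equalityI) (auto simp: phi_inf_nth)

lemma phi_inf_fix: "phiw phi_inf = phi_inf"
proof
  fix j
  have pe: "pre phi_inf (length (u (Suc j))) = u (Suc j)" by (rule pre_phi_inf)
  have "j < length (u (Suc (Suc j)))" using u_len[of "Suc (Suc j)"] by simp
  then have "j < length (phi (pre phi_inf (length (u (Suc j)))))"
    unfolding pe by (simp only: u_Suc[symmetric])
  then have "phiw phi_inf j = phi (pre phi_inf (length (u (Suc j)))) ! j" by (rule phi_prefix_nth)
  also have "\<dots> = u (Suc (Suc j)) ! j" unfolding pe by (simp only: u_Suc[symmetric])
  also have "\<dots> = phi_inf j" using \<open>j < length (u (Suc (Suc j)))\<close> by (simp add: phi_inf_nth)
  finally show "phiw phi_inf j = phi_inf j" .
qed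

lemma binary_phi_inf: "binary phi_inf"
  using binary_phiw[of phi_inf] by (simp add: phi_inf_fix)

lemma u2: "u 2 = [1,0,0,1,1]" by (simp add: u_def numeral_2_eq_2)

lemma phi_inf_vals: "phi_inf 0 = 1" "phi_inf 1 = 0" "phi_inf 2 = 0" "phi_inf 3 = 1"
  using phi_inf_nth[of _ 2] by (simp_all add: u2)

abbreviation M2 where "M2 \<equiv> alt_lyndon phi_inf"

lemma M2_binary: "x \<in> M2 \<Longrightarrow> binary x"
  unfolding alt_lyndon_def binary_def using phi_inf_vals(1) by simp

lemma zero_in: "(\<lambda>_. 0) \<in> M2"
proof -
  have "alt_less phi_inf (\<lambda>_. 0)" by (rule alt_less_start0) (simp_all add: phi_inf_vals)
  then have "alt_le phi_inf (\<lambda>i. (\<lambda>_. 0::nat) (k + i))" for k unfolding alt_le_def by simp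
  then show ?thesis unfolding alt_lyndon_def using phi_inf_vals(1) by blast
qed

lemma forbidden:
  assumes x: "x \<in> M2" and a: "x j = 1" "x (j + 1) = 0"
  shows "x (j + 2) = 0 \<and> x (j + 3) = 1"
proof -
  have b: "binary x" using M2_binary[OF x] .
  have "alt_le phi_inf (sh j x)" using x by (simp add: alt_lyndon_def sh_def)
  then consider "phi_inf = sh j x" | "alt_less phi_inf (sh j x)" unfolding alt_le_def by blast
  then show ?thesis
  proof cases
    case 1
    then have "sh j x 2 = phi_inf 2" "sh j x 3 = phi_inf 3" by simp_all
    then show ?thesis using phi_inf_vals by (simp add: sh_def)
  next
    case 2
    then obtain k where k: "\<forall>i<k. phi_inf i = sh j x i"
      "if even k then phi_inf k > sh j x k else phi_inf k < sh j x k"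
      unfolding alt_less_iff by blast
    have s0: "sh j x 0 = 1" "sh j x 1 = 0" using a by (simp_all add: sh_def)
    have bs: "sh j x i \<le> 1" for i using b by (simp add: binary_def sh_def)
    have "k \<noteq> 0"
    proof assume "k = 0" with k(2) s0 phi_inf_vals show False by simp qed
    moreover have "k \<noteq> 1"
    proof assume "k = 1" with k(2) s0 phi_inf_vals show False by simp qed
    moreover have "k \<noteq> 2"
    proof assume "k = 2" with k(2) phi_inf_vals show False by simp qed
    moreover have "k \<noteq> 3"
    proof assume "k = 3" with k(2) phi_inf_vals bs[of 3] show False by simp qed
    ultimately have "k \<ge> 4" by linarith
    then have "sh j x 2 = 0" "sh j x 3 = 1" using k(1) phi_inf_vals by auto
    then show ?thesis by (simp add: sh_def)
  qed
qed

fun pp :: "(nat \<Rightarrow> nat) \<Rightarrow> nat \<Rightarrow> nat" where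
  "pp x 0 = 0"
| "pp x (Suc i) = pp x i + (if x (pp x i + 1) = 1 then 1 else 3)"

lemma pp_ge: "pp x i \<ge> i" by (induction i) auto

lemma parse:
  assumes x: "x \<in> M2" and x0: "x 0 = 1"
  shows "\<exists>y. binary y \<and> x = phiw y"
proof -
  define y where "y i = (if x (pp x i + 1) = 1 then 0 else (1::nat))" for i
  have b: "binary x" using M2_binary[OF x] .
  have inv: "x (pp x i) = 1 \<and> pre x (pp x i) = phi (pre y i)" for i
  proof (induction i)
    case 0 then show ?case using x0 by (simp add: pre_def)
  next
    case (Suc i)
    define p where "p = pp x i"
    have xp: "x p = 1" and pr: "pre x p = phi (pre y i)" using Suc unfolding p_def by auto
    show ?case
    proof (cases "x (p + 1) = 1")
      case True
      then have "pp x (Suc i) = Suc p" "y i = 0" unfolding p_def y_def by auto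
      then show ?thesis using True xp pr by (simp add: pre_Suc)
    next
      case False
      then have x1: "x (p + 1) = 0" using b unfolding binary_def by (metis le_neq_implies_less less_one)
      then have x23: "x (p + 2) = 0" "x (p + 3) = 1" using forbidden[OF x xp] by auto
      have "pp x (Suc i) = Suc (Suc (Suc p))" "y i = 1" using False unfolding p_def y_def by auto
      then show ?thesis using x1 x23 xp pr
        by (simp add: pre_Suc numeral_3_eq_3 numeral_2_eq_2)
    qed
  qed
  have "x = phiw y"
  proof
    fix j
    define p where "p = pp x (Suc j)"
    have jp: "j < p" using pp_ge[of "Suc j" x] unfolding p_def by simp
    have e: "pre x p = phi (pre y (Suc j))" using inv unfolding p_def by blast
    then have "j < length (phi (pre y (Suc j)))" using jp by (metis pre_len)
    then have "phiw y j = phi (pre y (Suc j)) ! j" by (rule phi_prefix_nth)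
    also have "\<dots> = x j" using e jp by (metis pre_nth)
    finally show "x j = phiw y j" by simp
  qed
  moreover have "binary y" by (simp add: binary_def y_def)
  ultimately show ?thesis by blast
qed

lemma refl_in: assumes "binary y" "phiw y \<in> M2" shows "y \<in> M2"
  unfolding alt_lyndon_def
proof (safe)
  fix i show "y i \<le> phi_inf 0" using assms(1) by (simp add: binary_def phi_inf_vals)
next
  fix k
  show "alt_le phi_inf (\<lambda>i. y (k + i))"
  proof (rule ccontr)
    assume "\<not> alt_le phi_inf (\<lambda>i. y (k + i))"
    then have "alt_less (sh k y) phi_inf" using not_alt_le by (simp add: sh_def)
    moreover have "binary (sh k y)" using assms(1) by (simp add: binary_def sh_def)
    ultimately have "alt_less (phiw (sh k y)) (phiw phi_inf)"
      using phiw_mono binary_phi_inf by blast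
    then have "alt_less (sh (length (phi (pre y k))) (phiw y)) phi_inf"
      by (simp add: sh_phiw phi_inf_fix)
    moreover have "\<forall>k. alt_le phi_inf (\<lambda>i. phiw y (k + i))"
      using assms(2) by (simp add: alt_lyndon_def)
    then have "alt_le phi_inf (sh (length (phi (pre y k))) (phiw y))"
      by (simp add: sh_def)
    ultimately show False using alt_le_not_less by blast
  qed
qed

lemma decomp:
  assumes x: "x \<in> M2"
  shows "x = (\<lambda>_. 0) \<or> (\<exists>a y. y \<in> M2 \<and> x = prep (replicate a 0) (phiw y))"
proof (cases "\<forall>i. x i = 0")
  case True then show ?thesis by auto
next
  case False
  then obtain j where "x j \<noteq> 0" by auto
  define a where "a = (LEAST i. x i \<noteq> 0)"
  have xa: "x a \<noteq> 0" unfolding a_def by (rule LeastI) fact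
  have xb: "x i = 0" if "i < a" for i using not_less_Least that unfolding a_def by blast
  have "x a = 1" using xa M2_binary[OF x] unfolding binary_def by (metis le_neq_implies_less less_one)
  then have s0: "sh a x 0 = 1" by (simp add: sh_def)
  obtain y where y: "binary y" "sh a x = phiw y" using parse[OF sh_closed[OF x] s0] by blast
  have yM: "y \<in> M2" using refl_in[OF y(1)] sh_closed[OF x, of a] y(2) by simp
  have "pre x a = replicate a 0" by (rule nth_equalityI) (auto simp: xb)
  then have "x = prep (replicate a 0) (phiw y)" using prep_pre_sh[of x a] y(2) by simp
  then show ?thesis using yM by blast
qed




lemma phi_rep0: "phi (replicate m 0) = replicate m 1"
  by (induction m) auto

lemma pre_const: "pre (\<lambda>_. c) n = replicate n c"
  by (simp add: pre_def map_replicate_const)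

lemma phiw_zero: "phiw (\<lambda>_. 0) = (\<lambda>_. 1)"
  by (auto simp: phiw_def pre_const phi_rep0 fun_eq_iff simp del: replicate_Suc)

lemma phi2_len: "length (phi (phi w)) \<ge> 3 * length w"
proof (induction w)
  case Nil then show ?case by simp
next
  case (Cons a w)
  have "length (phi (phi_letter a)) \<ge> 3" by (cases a) auto
  then show ?case using Cons by simp
qed

lemma take_cap: "k \<le> n \<Longrightarrow> take k (replicate a c @ r) = take k (replicate (min a n) c @ r)"
  by (cases "a \<le> n") (auto simp: take_append min_def)

lemma take_app_cong: "take (n - length X) Y = take (n - length X) Y' \<Longrightarrow>
  take n (X @ Y) = take n (X @ Y')"
  by (simp add: take_append)

lemma take_app_take: "k \<le> n \<Longrightarrow> take k (X @ take n Y) = take k (X @ Y)"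
proof -
  assume "k \<le> n"
  then have "min (k - length X) n = k - length X" by simp
  then show ?thesis by (simp add: take_append)
qed

lemma take3: "take n (replicate a c @ replicate b d @ take n P) =
   take n (replicate (min a n) c @ replicate (min b n) d @ P)"
proof -
  have "take n (replicate a c @ replicate b d @ take n P) =
        take n (replicate (min a n) c @ (replicate b d @ take n P))"
    by (rule take_cap) simp
  also have "\<dots> = take n (replicate (min a n) c @ (replicate (min b n) d @ P))"
  proof (rule take_app_cong)
    let ?k = "n - length (replicate (min a n) c)"
    have k: "?k \<le> n" by simp
    have "take ?k (replicate b d @ take n P) = take ?k (replicate (min b n) d @ take n P)"
      by (rule take_cap[OF k])
    also have "\<dots> = take ?k (replicate (min b n) d @ P)"
      using take_app_take[OF k] by simp
    finally show "take ?k (replicate b d @ take n P) = take ?k (replicate (min b n) d @ P)" .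
  qed
  finally show ?thesis by simp
qed

lemma take2: "take n (replicate a c @ replicate n d) =
   take n (replicate (min a n) c @ replicate n d @ P)"
proof -
  have "take n (replicate a c @ replicate n d) = take n (replicate (min a n) c @ replicate n d)"
    by (rule take_cap) simp
  also have "\<dots> = take n (replicate (min a n) c @ (replicate n d @ P))"
    by (rule take_app_cong) (simp add: take_append)
  finally show ?thesis by simp
qed

lemma pre_phiw2: "pre (phiw (phiw z)) n = take n (phi (phi (pre z ((n + 2) div 3))))"
proof -
  define c where "c = (n + 2) div 3"
  define len where "len = length ((phi ^^ 2) (pre z c))"
  have e: "pre ((phiw ^^ 2) z) len = (phi ^^ 2) (pre z c)"
    unfolding len_def by (rule pre_phiw_iter)
  have "3 * c \<ge> n" unfolding c_def by presburger
  moreover have "len \<ge> 3 * c" unfolding len_def using phi2_len[of "pre z c"]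
    by (simp add: numeral_2_eq_2)
  ultimately have nl: "n \<le> len" by simp
  have "pre (phiw (phiw z)) n = take n (pre ((phiw ^^ 2) z) len)"
    using take_pre[OF nl] by (simp add: numeral_2_eq_2)
  also have "\<dots> = take n (phi (phi (pre z c)))" using e by (simp add: numeral_2_eq_2)
  finally show ?thesis unfolding c_def .
qed

definition Gf :: "nat \<Rightarrow> nat \<times> nat \<times> nat list \<Rightarrow> nat list" where
  "Gf n = (\<lambda>(a, b, w). take n (replicate a 0 @ replicate b 1 @ phi (phi w)))"

lemma count_sub:
  "factors M2 n \<subseteq> Gf n ` ({..n} \<times> {..n} \<times> factors M2 ((n + 2) div 3))"
proof
  fix w assume "w \<in> factors M2 n"
  then obtain x where x: "x \<in> M2" "w = pre x n" unfolding factors_alt by blast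
  define c where "c = (n + 2) div 3"
  have z0: "pre (\<lambda>_. 0) c \<in> factors M2 c" unfolding factors_alt using zero_in by blast
  consider "x = (\<lambda>_. 0)" | a y where "y \<in> M2" "x = prep (replicate a 0) (phiw y)"
    using decomp[OF x(1)] by blast
  then show "w \<in> Gf n ` ({..n} \<times> {..n} \<times> factors M2 ((n + 2) div 3))"
  proof cases
    case 1
    then have "w = Gf n (n, 0, pre (\<lambda>_. 0) c)" using x(2) by (simp add: Gf_def pre_const)
    then show ?thesis using z0 unfolding c_def by force
  next
    case (2 a y)
    consider "y = (\<lambda>_. 0)" | b z where "z \<in> M2" "y = prep (replicate b 0) (phiw z)"
      using decomp[OF 2(1)] by blast
    then show ?thesis
    proof cases
      case 1
      then have "x = prep (replicate a 0) (\<lambda>_. 1)" using 2 by (simp add: phiw_zero)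
      then have "w = take n (replicate a 0 @ replicate n 1)" using x(2)
        by (simp add: pre_prep pre_const)
      also have "\<dots> = Gf n (min a n, n, pre (\<lambda>_. 0) c)" unfolding Gf_def
        by (simp only: take2 prod.case)
      finally show ?thesis using z0 unfolding c_def by force
    next
      case (2 b z)
      have "x = prep (replicate a 0) (prep (replicate b 1) (phiw (phiw z)))"
        using 2 \<open>x = prep (replicate a 0) (phiw y)\<close> by (simp add: phiw_prep phi_rep0)
      then have "w = take n (replicate a 0 @ take n (replicate b 1 @ pre (phiw (phiw z)) n))"
        using x(2) by (simp add: pre_prep)
      also have "\<dots> = take n (replicate a 0 @ replicate b 1 @ pre (phiw (phiw z)) n)"
        using take_app_take[of n n "replicate a 0" "replicate b 1 @ pre (phiw (phiw z)) n"] by simp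
      also have "\<dots> = take n (replicate a 0 @ replicate b 1 @ take n (phi (phi (pre z c))))"
        by (simp add: pre_phiw2 c_def)
      also have "\<dots> = Gf n (min a n, min b n, pre z c)" unfolding Gf_def
        by (simp only: take3 prod.case)
      finally have "w = Gf n (min a n, min b n, pre z c)" .
      moreover have "pre z c \<in> factors M2 c" unfolding factors_alt using 2 by blast
      ultimately show ?thesis unfolding c_def by force
    qed
  qed
qed

lemma count_rec: "card (factors M2 n) \<le> (n + 1) ^ 2 * card (factors M2 ((n + 2) div 3))"
proof -
  let ?D = "{..n} \<times> {..n} \<times> factors M2 ((n + 2) div 3)"
  have fD: "finite ?D" by (simp add: finite_factors)
  have "card (factors M2 n) \<le> card (Gf n ` ?D)"
    by (rule card_mono[OF finite_imageI[OF fD] count_sub])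
  also have "\<dots> \<le> card ?D" by (rule card_image_le[OF fD])
  also have "\<dots> = (n + 1) * ((n + 1) * card (factors M2 ((n + 2) div 3)))"
    by (simp only: card_cartesian_product card_atMost Suc_eq_plus1)
  also have "\<dots> = (n + 1) ^ 2 * card (factors M2 ((n + 2) div 3))"
    by (simp only: power2_eq_square mult.assoc)
  finally show ?thesis .
qed

lemma card_triv: "card (factors M2 n) \<le> 2 ^ n"
proof -
  have "card (factors M2 n) \<le> card {w. set w \<subseteq> {0..phi_inf 0} \<and> length w = n}"
    by (rule card_mono[OF _ factors_sub_lists]) (simp add: finite_lists_length_eq)
  also have "\<dots> = 2 ^ n" by (subst card_lists_length_eq) (simp_all add: phi_inf_vals numeral_2_eq_2)
  finally show ?thesis .
qed

lemma Hbound: "n \<le> 3 ^ k \<Longrightarrow> card (factors M2 n) \<le> 2 * (n + 1) ^ (2 * k)"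
proof (induction k arbitrary: n)
  case 0
  then have "n \<le> 1" by simp
  then have "(2::nat) ^ n \<le> 2" by (cases n) auto
  then show ?case using card_triv[of n] by simp
next
  case (Suc k)
  define c where "c = (n + 2) div 3"
  have c1: "c \<le> 3 ^ k" using Suc.prems unfolding c_def by simp
  have c2: "c \<le> n" unfolding c_def by simp
  have "card (factors M2 n) \<le> (n + 1) ^ 2 * card (factors M2 c)" unfolding c_def by (rule count_rec)
  also have "\<dots> \<le> (n + 1) ^ 2 * (2 * (c + 1) ^ (2 * k))" using Suc.IH[OF c1] by simp
  also have "\<dots> \<le> (n + 1) ^ 2 * (2 * (n + 1) ^ (2 * k))" using c2
    by (intro mult_left_mono power_mono) auto
  also have "\<dots> = 2 * ((n + 1) ^ 2 * (n + 1) ^ (2 * k))" by (rule mult.left_commute)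
  also have "\<dots> = 2 * (n + 1) ^ (2 + 2 * k)" by (simp only: power_add)
  also have "\<dots> = 2 * (n + 1) ^ (2 * Suc k)" by simp
  finally show ?case .
qed

lemma g_lim: "(\<lambda>n. (ln 2 + 2 * (log 3 (real n) + 1) * ln (real n + 1)) / real n) \<longlonglongrightarrow> 0"
  by real_asymp

lemma part2: "entropy_tends M2 0"
proof -
  define H where "H n = real (card (factors M2 n))" for n
  have H1: "H n \<ge> 1" for n unfolding H_def using card_factors_ge1[OF zero_in] by simp
  define g where "g n = (ln 2 + 2 * (log 3 (real n) + 1) * ln (real n + 1)) / real n" for n
  have up: "ln (H n) / real n \<le> g n" if n1: "n \<ge> 1" for n
  proof -
    define k where "k = nat \<lceil>log 3 (real n)\<rceil>"
    have lg0: "log 3 (real n) \<ge> 0" using n1 by simp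
    have c0: "\<lceil>log 3 (real n)\<rceil> \<ge> 0" using lg0 by simp
    have kk: "real k = real_of_int \<lceil>log 3 (real n)\<rceil>" unfolding k_def using c0 by simp
    have kle: "log 3 (real n) \<le> real k" unfolding kk by (rule le_of_int_ceiling)
    have kge: "real k \<le> log 3 (real n) + 1" unfolding kk by (rule of_int_ceiling_le_add_one)
    have "real n = 3 powr (log 3 (real n))" using n1 by simp
    also have "\<dots> \<le> 3 powr (real k)" using kle by (intro powr_mono) auto
    also have "\<dots> = 3 ^ k" by (simp add: powr_realpow)
    finally have "real n \<le> real (3 ^ k)" by simp
    then have "n \<le> 3 ^ k" by linarith
    then have "card (factors M2 n) \<le> 2 * (n + 1) ^ (2 * k)" by (rule Hbound)
    then have "real (card (factors M2 n)) \<le> real (2 * (n + 1) ^ (2 * k))" by (simp only: of_nat_le_iff)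
    then have "H n \<le> 2 * (real n + 1) ^ (2 * k)" unfolding H_def by (simp add: add.commute)
    then have "ln (H n) \<le> ln (2 * (real n + 1) ^ (2 * k))"
      using H1[of n] by (subst ln_le_cancel_iff) auto
    also have "\<dots> = ln 2 + real (2 * k) * ln (real n + 1)"
      by (simp add: ln_mult ln_realpow)
    also have "\<dots> \<le> ln 2 + 2 * (log 3 (real n) + 1) * ln (real n + 1)"
      using kge by (intro add_left_mono mult_right_mono) auto
    finally show ?thesis unfolding g_def using n1 by (intro divide_right_mono) auto
  qed
  have lo: "0 \<le> ln (H n) / real n" for n using H1[of n] by simp
  have "(\<lambda>n. ln (H n) / real n) \<longlonglongrightarrow> 0"
  proof (rule tendsto_sandwich[of "\<lambda>_. 0" _ sequentially g])
    show "\<forall>\<^sub>F n in sequentially. 0 \<le> ln (H n) / real n" using lo by simp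
    show "\<forall>\<^sub>F n in sequentially. ln (H n) / real n \<le> g n"
      using up by (intro eventually_sequentiallyI[of 1]) auto
    show "(\<lambda>_. 0) \<longlonglongrightarrow> (0::real)" by simp
    show "g \<longlonglongrightarrow> 0" unfolding g_def by (rule g_lim)
  qed
  then show ?thesis unfolding entropy_tends_def H_def .
qed


lemma phin_len_ge: "length w \<le> length ((phi ^^ m) w)"
  by (induction m) (auto intro: order_trans[OF _ phi_len_ge])

theorem proposition5:
  shows "(\<forall>n. \<exists>h>0. entropy_tends (alt_lyndon (eventually_periodic (u n) (v n))) h)
       \<and> entropy_tends (alt_lyndon phi_inf) 0"
proof
  show "\<forall>n. \<exists>h>0. entropy_tends (alt_lyndon (eventually_periodic (u n) (v n))) h"
  proof
    fix n
    have x: "(phiw ^^ Suc n) (\<lambda>_. 0) \<in> alt_lyndon ((phiw ^^ n) d0)"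
      by (rule iter_in) (simp add: binary_def)
    have L: "length ((phi ^^ Suc n) [1,0,0]) \<ge> 1"
      using phin_len_ge[of "[1,0,0]" "Suc n"] by simp
    show "\<exists>h>0. entropy_tends (alt_lyndon (eventually_periodic (u n) (v n))) h"
      unfolding dn by (rule entropy_pos[OF x L lower_count])
  qed
  show "entropy_tends (alt_lyndon phi_inf) 0" by (rule part2)
qed

end
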